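(* Let $\mathbb{K}$ be a field of characteristic $0$, $\mathcal{S}=\mathbb{K}[x_0,\dots,x_n]$, $R=\mathbb{K}[x_1,\dots,x_n]$, $k\le d$, $\omega\in\mathcal{S}_k$ and $\ell=x_0+\xi_1x_1+\dots+\xi_nx_n$ with $\xi\in\mathbb{K}^n$ and $\ell\nmid\omega$. Let $I_\xi:=\{p\in R:p\star(\omega^{d,\ell,\mathbf x}(\mathbf z)\,e_\xi(\mathbf z))=0\}$ and $\mathcal{A}_\xi:=R/I_\xi$. Then $\mathcal{N}(\mathcal{A}_\xi)-1=k=\deg(\omega)$.
   Context: $R^*$ is identified with $\mathbb{K}[[z_1,\dots,z_n]]$ via $\sum_\alpha\varphi_\alpha\mathbf z^\alpha/\alpha!\leftrightarrow(\mathbf x^\alpha\mapsto\varphi_\alpha)$; for $p\in R$, $p\star\varphi$ is the functional $q\mapsto\varphi(pq)$; $e_\xi(\mathbf z)=\exp(\sum_i\xi_iz_i)$. Writing $\omega=\sum_{j=0}^k\omega_j\ell^{k-j}$ with $\omega_j\in\mathbb{K}[x_1,\dots,x_n]_j$, set $\omega^{d,\ell,\mathbf x}:=\frac1{d!}\sum_{j=0}^k(d-j)!\,\omega_j$, read in the variables $z_1,\dots,z_n$. $I_\xi$ is an ideal contained in $\mathfrak m_\xi=(x_1-\xi_1,\dots,x_n-\xi_n)$, so $a(\xi)$ is well defined for $a\in\mathcal{A}_\xi$. The nil-index $\mathcal{N}(\mathcal{A}_\xi)$ is the minimal $N\in\mathbb{N}$ such that $(a-a(\xi))^N=0$ in $\mathcal{A}_\xi$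 for every $a\in\mathcal{A}_\xi$. *)

theory Defs
  imports Main "HOL-Library.Poly_Mapping"
begin

text \<open>Variable x_0 is index 0; R = K[x_1..x_n] are those polynomials whose
  monomials only involve indices 1..n.\<close>

type_synonym 'a mpoly = "(nat \<Rightarrow>\<^sub>0 nat) \<Rightarrow>\<^sub>0 'a"

definition Var :: "nat \<Rightarrow> 'a::comm_ring_1 mpoly" where
  "Var i = Poly_Mapping.single (Poly_Mapping.single i 1) 1"

definition Const :: "'a::comm_ring_1 \<Rightarrow> 'a mpoly" where
  "Const c = Poly_Mapping.single 0 c"

definition mdeg :: "(nat \<Rightarrow>\<^sub>0 nat) \<Rightarrow> nat" where
  "mdeg \<alpha> = (\<Sum>i\<in>Poly_Mapping.keys \<alpha>. Poly_Mapping.lookup \<alpha> i)"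

definition in_R :: "nat \<Rightarrow> 'a::comm_ring_1 mpoly \<Rightarrow> bool" where
  "in_R n p \<longleftrightarrow> (\<forall>\<alpha>\<in>Poly_Mapping.keys p. Poly_Mapping.keys \<alpha> \<subseteq> {1..n})"

definition in_S :: "nat \<Rightarrow> 'a::comm_ring_1 mpoly \<Rightarrow> bool" where
  "in_S n p \<longleftrightarrow> (\<forall>\<alpha>\<in>Poly_Mapping.keys p. Poly_Mapping.keys \<alpha> \<subseteq> {0..n})"

text \<open>p is homogeneous of degree j (the zero polynomial counts as homogeneous of every degree)\<close>
definition homogeneous :: "nat \<Rightarrow> 'a::comm_ring_1 mpoly \<Rightarrow> bool" where
  "homogeneous j p \<longleftrightarrow> (\<forall>\<alpha>\<in>Poly_Mapping.keys p. mdeg \<alpha> = j)"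

definition mpow :: "(nat \<Rightarrow> 'a::comm_ring_1) \<Rightarrow> (nat \<Rightarrow>\<^sub>0 nat) \<Rightarrow> 'a" where
  "mpow \<xi> \<alpha> = (\<Prod>i\<in>Poly_Mapping.keys \<alpha>. \<xi> i ^ Poly_Mapping.lookup \<alpha> i)"

definition mfact :: "(nat \<Rightarrow>\<^sub>0 nat) \<Rightarrow> nat" where
  "mfact \<alpha> = (\<Prod>i\<in>Poly_Mapping.keys \<alpha>. fact (Poly_Mapping.lookup \<alpha> i))"

definition eval :: "'a::comm_ring_1 mpoly \<Rightarrow> (nat \<Rightarrow> 'a) \<Rightarrow> 'a" where
  "eval p \<xi> = (\<Sum>\<alpha>\<in>Poly_Mapping.keys p. Poly_Mapping.lookup p \<alpha> * mpow \<xi> \<alpha>)"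

text \<open>Formal power series in z_1..z_n: coefficient function alpha |-> [z^alpha] F.\<close>
type_synonym 'a fser = "(nat \<Rightarrow>\<^sub>0 nat) \<Rightarrow> 'a"

definition mle :: "(nat \<Rightarrow>\<^sub>0 nat) \<Rightarrow> (nat \<Rightarrow>\<^sub>0 nat) \<Rightarrow> bool" where
  "mle \<beta> \<alpha> \<longleftrightarrow> (\<forall>i. Poly_Mapping.lookup \<beta> i \<le> Poly_Mapping.lookup \<alpha> i)"

definition ser_mult :: "'a::comm_ring_1 fser \<Rightarrow> 'a fser \<Rightarrow> 'a fser" where
  "ser_mult F G = (\<lambda>\<alpha>. \<Sum>\<beta>\<in>{\<beta>. mle \<beta> \<alpha>}. F \<beta> * G (\<alpha> - \<beta>))"

text \<open>a polynomial in x_1..x_n read in the variables z_1..z_n\<close>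
definition ser_of_poly :: "'a::comm_ring_1 mpoly \<Rightarrow> 'a fser" where
  "ser_of_poly q = (\<lambda>\<alpha>. Poly_Mapping.lookup q \<alpha>)"

text \<open>e_xi(z) = exp(sum_i xi_i z_i) = sum_alpha xi^alpha z^alpha / alpha!\<close>
definition exp_ser :: "nat \<Rightarrow> (nat \<Rightarrow> 'a::field_char_0) \<Rightarrow> 'a fser" where
  "exp_ser n \<xi> = (\<lambda>\<alpha>. if Poly_Mapping.keys \<alpha> \<subseteq> {1..n} then mpow \<xi> \<alpha> / of_nat (mfact \<alpha>) else 0)"

text \<open>Identification R* = K[[z]]: sum_alpha phi_alpha z^alpha/alpha! corresponds to the
  functional x^alpha |-> phi_alpha. A functional is represented by its values on monomials.\<close>
definition functional_of_ser :: "'a::field_char_0 fser \<Rightarrow> ((nat \<Rightarrow>\<^sub>0 nat) \<Rightarrow> 'a)" where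
  "functional_of_ser F = (\<lambda>\<alpha>. of_nat (mfact \<alpha>) * F \<alpha>)"

definition dual_app :: "((nat \<Rightarrow>\<^sub>0 nat) \<Rightarrow> 'a::comm_ring_1) \<Rightarrow> 'a mpoly \<Rightarrow> 'a" where
  "dual_app \<phi> q = (\<Sum>\<alpha>\<in>Poly_Mapping.keys q. Poly_Mapping.lookup q \<alpha> * \<phi> \<alpha>)"

definition star :: "nat \<Rightarrow> 'a::comm_ring_1 mpoly \<Rightarrow> ((nat \<Rightarrow>\<^sub>0 nat) \<Rightarrow> 'a) \<Rightarrow> ((nat \<Rightarrow>\<^sub>0 nat) \<Rightarrow> 'a)" where
  "star n p \<phi> = (\<lambda>\<beta>. if Poly_Mapping.keys \<beta> \<subseteq> {1..n} then dual_app \<phi> (p * Poly_Mapping.single \<beta> 1) else 0)"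

definition omega_dlx :: "nat \<Rightarrow> nat \<Rightarrow> (nat \<Rightarrow> 'a::field_char_0 mpoly) \<Rightarrow> 'a mpoly" where
  "omega_dlx d k om = (\<Sum>j\<le>k. Const (fact (d - j) / fact d) * om j)"

definition I_xi :: "nat \<Rightarrow> nat \<Rightarrow> nat \<Rightarrow> (nat \<Rightarrow> 'a::field_char_0 mpoly) \<Rightarrow> (nat \<Rightarrow> 'a) \<Rightarrow> 'a mpoly set" where
  "I_xi n d k om \<xi> = {p. in_R n p \<and>
     star n p (functional_of_ser (ser_mult (ser_of_poly (omega_dlx d k om)) (exp_ser n \<xi>))) = (\<lambda>_. 0)}"

text \<open>Nil-index of A = R/I, written out in R: (a - a(xi))^N = 0 in R/I means
  (p - p(xi))^N \<in> I for a representative p \<in> R.\<close>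
definition nil_prop :: "nat \<Rightarrow> 'a::comm_ring_1 mpoly set \<Rightarrow> (nat \<Rightarrow> 'a) \<Rightarrow> nat \<Rightarrow> bool" where
  "nil_prop n I \<xi> N \<longleftrightarrow> (\<forall>p. in_R n p \<longrightarrow> (p - Const (eval p \<xi>)) ^ N \<in> I)"

definition is_nil_index :: "nat \<Rightarrow> 'a::comm_ring_1 mpoly set \<Rightarrow> (nat \<Rightarrow> 'a) \<Rightarrow> nat \<Rightarrow> bool" where
  "is_nil_index n I \<xi> N \<longleftrightarrow> nil_prop n I \<xi> N \<and> (\<forall>M<N. \<not> nil_prop n I \<xi> M)"

end

theory Submission
  imports Defs "HOL-Computational_Algebra.Polynomial"
begin


abbreviation lk where "lk \<equiv> Poly_Mapping.lookup"
abbreviation ks where "ks \<equiv> Poly_Mapping.keys"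
abbreviation sng where "sng \<equiv> Poly_Mapping.single"

definition lext :: "('k \<Rightarrow> 'a::zero \<Rightarrow> 'b::comm_monoid_add) \<Rightarrow> ('k \<Rightarrow>\<^sub>0 'a) \<Rightarrow> 'b" where
  "lext h p = (\<Sum>k\<in>ks p. h k (lk p k))"

lemma lext_superset:
  assumes "finite S" "ks p \<subseteq> S" "\<And>k. h k 0 = 0"
  shows "lext h p = (\<Sum>k\<in>S. h k (lk p k))"
  unfolding lext_def
  by (rule sum.mono_neutral_left) (use assms in \<open>auto simp: in_keys_iff\<close>)

lemma lext_add:
  fixes h :: "'k \<Rightarrow> 'a::monoid_add \<Rightarrow> 'b::comm_monoid_add"
  assumes "\<And>k x y. h k (x + y) = h k x + h k y" "\<And>k. h k 0 = 0"
  shows "lext h (p + q) = lext h p + lext h q"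
proof -
  let ?S = "ks p \<union> ks q"
  have "lext h (p + q) = (\<Sum>k\<in>?S. h k (lk (p+q) k))"
    by (rule lext_superset) (use assms Poly_Mapping.keys_add[of p q] in auto)
  also have "\<dots> = (\<Sum>k\<in>?S. h k (lk p k)) + (\<Sum>k\<in>?S. h k (lk q k))"
    by (simp add: lookup_add assms sum.distrib)
  also have "\<dots> = lext h p + lext h q"
    by (subst (1 2) lext_superset[where S="?S"]) (use assms in auto)
  finally show ?thesis .
qed

lemma lext_single:
  assumes "\<And>k. h k 0 = 0"
  shows "lext h (sng k c) = h k c"
  using assms by (cases "c = 0") (auto simp: lext_def)

lemma pm_expand: "p = (\<Sum>k\<in>ks p. sng k (lk p k))"
proof (rule poly_mapping_eqI)
  fix x
  show "lk p x = lk (\<Sum>k\<in>ks p. sng k (lk p k)) x"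
    by (cases "x \<in> ks p") (auto simp: lookup_sum lookup_single when_def in_keys_iff)
qed

lemma additive_sum:
  fixes F :: "'x::comm_monoid_add \<Rightarrow> 'b::ab_group_add"
  assumes "\<And>p q. F (p + q) = F p + F q"
  shows "F (\<Sum>i\<in>I. g i) = (\<Sum>i\<in>I. F (g i))"
proof -
  have F0: "F 0 = 0" using assms[of 0 0] by simp
  show ?thesis
    by (induction I rule: infinite_finite_induct) (auto simp: F0 assms)
qed

lemma lin_eq:
  fixes F G :: "('k \<Rightarrow>\<^sub>0 'a::comm_monoid_add) \<Rightarrow> 'b::ab_group_add"
  assumes "\<And>p q. F (p + q) = F p + F q" "\<And>p q. G (p + q) = G p + G q"
    and "\<And>k c. F (sng k c) = G (sng k c)"
  shows "F p = G p"
proof -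
  have "F p = F (\<Sum>k\<in>ks p. sng k (lk p k))" by (subst pm_expand) simp
  also have "\<dots> = (\<Sum>k\<in>ks p. F (sng k (lk p k)))" by (rule additive_sum) (rule assms)
  also have "\<dots> = (\<Sum>k\<in>ks p. G (sng k (lk p k)))" using assms(3) by simp
  also have "\<dots> = G (\<Sum>k\<in>ks p. sng k (lk p k))" by (rule additive_sum[symmetric]) (rule assms)
  also have "\<dots> = G p" by (subst (2) pm_expand) simp
  finally show ?thesis .
qed

lemma lin_eq_on:
  fixes F G :: "('k \<Rightarrow>\<^sub>0 'a::comm_monoid_add) \<Rightarrow> 'b::ab_group_add"
  assumes "\<And>p q. F (p + q) = F p + F q" "\<And>p q. G (p + q) = G p + G q"
    and "\<And>k c. P k \<Longrightarrow> F (sng k c) = G (sng k c)"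
    and "\<forall>k\<in>ks p. P k"
  shows "F p = G p"
proof -
  have "F p = F (\<Sum>k\<in>ks p. sng k (lk p k))" by (subst pm_expand) simp
  also have "\<dots> = (\<Sum>k\<in>ks p. F (sng k (lk p k)))" by (rule additive_sum) (rule assms)
  also have "\<dots> = (\<Sum>k\<in>ks p. G (sng k (lk p k)))" using assms(3,4) by simp
  also have "\<dots> = G (\<Sum>k\<in>ks p. sng k (lk p k))" by (rule additive_sum[symmetric]) (rule assms)
  also have "\<dots> = G p" by (subst (2) pm_expand) simp
  finally show ?thesis .
qed

lemma bilin_eq:
  fixes F G :: "('k \<Rightarrow>\<^sub>0 'a::comm_monoid_add) \<Rightarrow> ('k \<Rightarrow>\<^sub>0 'a::comm_monoid_add) \<Rightarrow> 'b::ab_group_add"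
  assumes "\<And>p q r. F (p + q) r = F p r + F q r" "\<And>p q r. G (p + q) r = G p r + G q r"
    "\<And>p q r. F r (p + q) = F r p + F r q" "\<And>p q r. G r (p + q) = G r p + G r q"
    and "\<And>k c l d. F (sng k c) (sng l d) = G (sng k c) (sng l d)"
  shows "F p q = G p q"
proof -
  have 1: "F (sng k c) q = G (sng k c) q" for k c
  proof (rule lin_eq[where F="\<lambda>q. F (sng k c) q" and G="\<lambda>q. G (sng k c) q"])
    show "\<And>p q. F (sng k c) (p + q) = F (sng k c) p + F (sng k c) q" by (rule assms(3))
    show "\<And>p q. G (sng k c) (p + q) = G (sng k c) p + G (sng k c) q" by (rule assms(4))
    show "\<And>l d. F (sng k c) (sng l d) = G (sng k c) (sng l d)" by (rule assms(5))
  qed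
  show ?thesis
  proof (rule lin_eq[where F="\<lambda>p. F p q" and G="\<lambda>p. G p q"])
    show "\<And>p r. F (p + r) q = F p q + F r q" by (rule assms(1))
    show "\<And>p r. G (p + r) q = G p q + G r q" by (rule assms(2))
    show "\<And>k c. F (sng k c) q = G (sng k c) q" by (rule 1)
  qed
qed



lemma keys_minus_nat: "ks (\<alpha> - \<beta> :: nat \<Rightarrow>\<^sub>0 nat) \<subseteq> ks \<alpha>"
  by (auto simp: in_keys_iff lookup_minus)

lemma mpow_superset: "finite S \<Longrightarrow> ks \<alpha> \<subseteq> S \<Longrightarrow> mpow \<xi> \<alpha> = (\<Prod>i\<in>S. \<xi> i ^ lk \<alpha> i)"
  unfolding mpow_def by (rule prod.mono_neutral_left) (auto simp: in_keys_iff)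

lemma mfact_superset: "finite S \<Longrightarrow> ks \<alpha> \<subseteq> S \<Longrightarrow> mfact \<alpha> = (\<Prod>i\<in>S. fact (lk \<alpha> i))"
  unfolding mfact_def by (rule prod.mono_neutral_left) (auto simp: in_keys_iff)

lemma mpow_add: "mpow \<xi> (\<alpha> + \<beta>) = mpow \<xi> \<alpha> * mpow \<xi> \<beta>"
proof -
  let ?S = "ks \<alpha> \<union> ks \<beta>"
  have "mpow \<xi> (\<alpha> + \<beta>) = (\<Prod>i\<in>?S. \<xi> i ^ lk (\<alpha>+\<beta>) i)"
    by (rule mpow_superset) (use Poly_Mapping.keys_add[of \<alpha> \<beta>] in auto)
  also have "\<dots> = (\<Prod>i\<in>?S. \<xi> i ^ lk \<alpha> i) * (\<Prod>i\<in>?S. \<xi> i ^ lk \<beta> i)"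
    by (simp add: lookup_add power_add prod.distrib)
  also have "\<dots> = mpow \<xi> \<alpha> * mpow \<xi> \<beta>"
    by (subst (1 2) mpow_superset[where S="?S"]) auto
  finally show ?thesis .
qed

lemma mpow_zero [simp]: "mpow \<xi> 0 = 1" by (simp add: mpow_def)

lemma mpow_unit: "mpow \<xi> (sng i 1) = \<xi> i" by (simp add: mpow_def)
lemmas mpow_unit' [simp] = mpow_unit[simplified]

lemma eval_lext: "eval p \<xi> = lext (\<lambda>\<alpha> c. c * mpow \<xi> \<alpha>) p"
  by (simp add: eval_def lext_def)

lemma eval_add: "eval (p + q) \<xi> = eval p \<xi> + eval q \<xi>"
  unfolding eval_lext by (rule lext_add) (auto simp: distrib_right)

lemma eval_single: "eval (sng \<alpha> c) \<xi> = c * mpow \<xi> \<alpha>"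
  unfolding eval_lext by (subst lext_single) auto

lemma eval_mult: "eval (p * q) \<xi> = eval p \<xi> * eval q \<xi>"
  by (rule bilin_eq[where F="\<lambda>p q. eval (p * q) \<xi>" and G="\<lambda>p q. eval p \<xi> * eval q \<xi>"])
     (auto simp: eval_add distrib_left distrib_right mult_single eval_single mpow_add)

lemma eval_diff: "eval (p - q) \<xi> = eval p \<xi> - eval q \<xi>"
  using eval_add[of "p - q" q \<xi>] by simp

lemma eval_zero [simp]: "eval 0 \<xi> = 0" by (simp add: eval_def)

lemma eval_sum: "eval (\<Sum>i\<in>I. g i) \<xi> = (\<Sum>i\<in>I. eval (g i) \<xi>)"
  by (rule additive_sum) (rule eval_add)

lemma eval_Const [simp]: "eval (Const c) \<xi> = c"
  by (simp add: Const_def eval_single)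

lemma eval_one [simp]: "eval 1 \<xi> = 1"
  using eval_Const[of 1 \<xi>] by (simp add: Const_def)

lemma eval_Var [simp]: "eval (Var i) \<xi> = \<xi> i"
  by (simp add: Var_def eval_single mpow_unit)

lemma eval_power: "eval (p ^ m) \<xi> = eval p \<xi> ^ m"
  by (induction m) (auto simp: eval_mult)

lemma dual_lext: "dual_app \<phi> q = lext (\<lambda>\<alpha> c. c * \<phi> \<alpha>) q"
  by (simp add: dual_app_def lext_def)

lemma dual_add: "dual_app \<phi> (p + q) = dual_app \<phi> p + dual_app \<phi> q"
  unfolding dual_lext by (rule lext_add) (auto simp: distrib_right)

lemma dual_single: "dual_app \<phi> (sng \<alpha> c) = c * \<phi> \<alpha>"
  unfolding dual_lext by (subst lext_single) auto

lemma Const_mult_single: "Const c * sng \<alpha> e = sng \<alpha> (c * e)"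
  by (simp add: Const_def mult_single)

lemma dual_Const_mult: "dual_app \<phi> (Const c * p) = c * dual_app \<phi> p"
  by (rule lin_eq[where F="\<lambda>p. dual_app \<phi> (Const c * p)" and G="\<lambda>p. c * dual_app \<phi> p"])
     (auto simp: distrib_left dual_add Const_mult_single dual_single)

lemma lookup_Const_mult: "lk (Const c * p) \<alpha> = c * lk p \<alpha>"
  by (simp add: Const_def mult_map_scale_conv_mult[symmetric] Poly_Mapping.map.rep_eq when_def)

lemma Const_mult_Const: "Const c * Const e = Const (c * e)"
  by (simp add: Const_def mult_single)

lemma Const_add: "Const c + Const e = Const (c + e)"
  by (simp add: Const_def single_add)

definition FF :: "nat \<Rightarrow> nat \<Rightarrow> nat" where "FF x c = (\<Prod>t<c. x - t)"

lemma FF_0 [simp]: "FF x 0 = 1" by (simp add: FF_def)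
lemma FF_Suc: "FF x (Suc c) = FF x c * (x - c)" by (simp add: FF_def)
lemma FF_1 [simp]: "FF x (Suc 0) = x" by (simp add: FF_def)

lemma FF_add: "FF x (b + a) = FF x b * FF (x - b) a"
  by (induction a) (auto simp: FF_Suc diff_diff_add)

lemma FF_fact: "c \<le> x \<Longrightarrow> FF x c * fact (x - c) = fact x"
proof (induction c)
  case (Suc c)
  then have "x - c = Suc (x - Suc c)" by simp
  then have "fact (x - c) = (x - c) * fact (x - Suc c)" by (simp add: fact_Suc)
  with Suc show ?case by (simp add: FF_Suc)
qed simp

lemma FF_zero: "x < c \<Longrightarrow> FF x c = 0"
  unfolding FF_def by (rule prod_zero) auto

definition ff :: "(nat \<Rightarrow>\<^sub>0 nat) \<Rightarrow> (nat \<Rightarrow>\<^sub>0 nat) \<Rightarrow> nat" where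
  "ff \<alpha> \<gamma> = (\<Prod>i\<in>ks \<gamma>. FF (lk \<alpha> i) (lk \<gamma> i))"

lemma ff_superset: "finite S \<Longrightarrow> ks \<gamma> \<subseteq> S \<Longrightarrow> ff \<alpha> \<gamma> = (\<Prod>i\<in>S. FF (lk \<alpha> i) (lk \<gamma> i))"
  unfolding ff_def by (rule prod.mono_neutral_left) (auto simp: in_keys_iff)

lemma ff_unit: "ff \<alpha> (sng i 1) = lk \<alpha> i"
  by (simp add: ff_def)
lemmas ff_unit' [simp] = ff_unit[simplified]

lemma ff_zero_right [simp]: "ff \<alpha> 0 = 1" by (simp add: ff_def)

lemma ff_add: "ff \<alpha> b * ff (\<alpha> - b) a = ff \<alpha> (a + b)"
proof -
  let ?S = "ks a \<union> ks b"
  have "ff \<alpha> (a + b) = (\<Prod>i\<in>?S. FF (lk \<alpha> i) (lk (a + b) i))"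
    by (rule ff_superset) (use Poly_Mapping.keys_add[of a b] in auto)
  also have "\<dots> = (\<Prod>i\<in>?S. FF (lk \<alpha> i) (lk b i)) * (\<Prod>i\<in>?S. FF (lk (\<alpha> - b) i) (lk a i))"
  proof -
    have "\<And>i. FF (lk \<alpha> i) (lk (a + b) i) = FF (lk \<alpha> i) (lk b i) * FF (lk (\<alpha> - b) i) (lk a i)"
      by (metis FF_add add.commute lookup_add lookup_minus)
    then show ?thesis by (simp add: prod.distrib[symmetric])
  qed
  also have "\<dots> = ff \<alpha> b * ff (\<alpha> - b) a"
    by (subst (1 2) ff_superset[where S="?S"]) auto
  finally show ?thesis by simp
qed

definition Dg :: "(nat \<Rightarrow>\<^sub>0 nat) \<Rightarrow> 'a::comm_ring_1 mpoly \<Rightarrow> 'a mpoly" where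
  "Dg \<gamma> p = lext (\<lambda>\<alpha> c. sng (\<alpha> - \<gamma>) (c * of_nat (ff \<alpha> \<gamma>))) p"

lemma Dg_add: "Dg \<gamma> (p + q) = Dg \<gamma> p + Dg \<gamma> q"
  unfolding Dg_def by (rule lext_add) (auto simp: distrib_right single_add)

lemma Dg_single: "Dg \<gamma> (sng \<alpha> c) = sng (\<alpha> - \<gamma>) (c * of_nat (ff \<alpha> \<gamma>))"
  unfolding Dg_def by (subst lext_single) auto

lemma Dg_diff: "Dg \<gamma> (p - q) = Dg \<gamma> p - Dg \<gamma> q"
  using Dg_add[of \<gamma> "p - q" q] by simp

lemma Dg_zero [simp]: "Dg \<gamma> 0 = 0" by (simp add: Dg_def lext_def)

lemma Dg_sum: "Dg \<gamma> (\<Sum>i\<in>I. g i) = (\<Sum>i\<in>I. Dg \<gamma> (g i))"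
  by (rule additive_sum) (rule Dg_add)

lemma Dg_comp: "Dg a (Dg b p) = Dg (a + b) p"
proof (rule lin_eq[where F="\<lambda>p. Dg a (Dg b p)" and G="Dg (a + b)"])
  fix k :: "nat \<Rightarrow>\<^sub>0 nat" and c :: 'a
  have e: "k - b - a = k - (a + b)"
    by (rule poly_mapping_eqI) (simp add: lookup_minus lookup_add)
  show "Dg a (Dg b (sng k c)) = Dg (a + b) (sng k c)"
    by (simp add: Dg_single e ff_add[symmetric] mult.assoc)
qed (auto simp: Dg_add)

lemma Dg_0 [simp]: "Dg 0 p = p"
  by (rule lin_eq[where F="Dg 0" and G="\<lambda>p. p"]) (auto simp: Dg_add Dg_single)

lemma shift_eq: "0 < lk l i \<Longrightarrow> k + (l - sng i 1) = k + l - sng i (1::nat)"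
  by (rule poly_mapping_eqI) (auto simp: lookup_minus lookup_add lookup_single when_def)

lemma shift_eq': "0 < lk k i \<Longrightarrow> k - sng i 1 + l = k + l - sng i (1::nat)"
  by (rule poly_mapping_eqI) (auto simp: lookup_minus lookup_add lookup_single when_def)

lemma leibniz: "Dg (sng i 1) (p * q) = Dg (sng i 1) p * q + p * Dg (sng i 1) q"
proof (rule bilin_eq[where F="\<lambda>p q. Dg (sng i 1) (p * q)" and G="\<lambda>p q. Dg (sng i 1) p * q + p * Dg (sng i 1) q"])
  fix k l :: "nat \<Rightarrow>\<^sub>0 nat" and c d :: 'a
  have 1: "sng (k - sng i (Suc 0) + l) (c * of_nat (lk k i) * d) = sng (k + l - sng i (Suc 0)) (c * of_nat (lk k i) * d)"
  proof (cases "lk k i = 0")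
    case False
    then show ?thesis using shift_eq'[of k i l] by simp
  qed simp
  have 2: "sng (k + (l - sng i (Suc 0))) (c * (d * of_nat (lk l i))) = sng (k + l - sng i (Suc 0)) (c * (d * of_nat (lk l i)))"
  proof (cases "lk l i = 0")
    case False
    then show ?thesis using shift_eq[of l i k] by simp
  qed simp
  have "Dg (sng i (Suc 0)) (sng k c * sng l d) = sng (k+l - sng i (Suc 0)) (c*d*of_nat(lk k i) + c*d*of_nat(lk l i))"
    by (simp add: mult_single Dg_single lookup_add distrib_left)
  also have "\<dots> = sng (k - sng i (Suc 0) + l) (c * of_nat (lk k i) * d) + sng (k + (l - sng i (Suc 0))) (c * (d * of_nat (lk l i)))"
    unfolding 1 2 single_add by (simp add: mult_ac)
  also have "\<dots> = Dg (sng i (Suc 0)) (sng k c) * sng l d + sng k c * Dg (sng i (Suc 0)) (sng l d)"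
    by (simp add: mult_single Dg_single)
  finally show "Dg (sng i 1) (sng k c * sng l d) = Dg (sng i 1) (sng k c) * sng l d + sng k c * Dg (sng i 1) (sng l d)"
    by simp
qed (auto simp: Dg_add distrib_left distrib_right)
lemmas leibniz' = leibniz[simplified]

lemma Dg_Const: "Dg (sng i 1) (Const c) = 0"
  by (simp add: Const_def Dg_single ff_unit)

lemma Dg_Var: "Dg (sng i 1) (Var j) = (if i = j then 1 else 0)"
  by (auto simp: Var_def Dg_single ff_unit lookup_single)

lemma Dg_Const_mult: "Dg (sng i 1) (Const c * p) = Const c * Dg (sng i 1) p"
  by (simp add: leibniz' Dg_Const[simplified])

lemma Dg_power: "Dg (sng i 1) (p ^ Suc m) = of_nat (Suc m) * p ^ m * Dg (sng i 1) p"
  by (induction m) (auto simp: leibniz' algebra_simps)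



lemma keys_diff_sub: "ks (p - q) \<subseteq> ks p \<union> ks (q :: 'k \<Rightarrow>\<^sub>0 'b::ab_group_add)"
  by (auto simp: in_keys_iff lookup_minus)

lemma in_R_add: "in_R n p \<Longrightarrow> in_R n q \<Longrightarrow> in_R n (p + q)"
  unfolding in_R_def using Poly_Mapping.keys_add[of p q] by blast

lemma in_R_diff: "in_R n p \<Longrightarrow> in_R n q \<Longrightarrow> in_R n (p - q)"
  unfolding in_R_def using keys_diff_sub[of p q] by blast

lemma in_R_mult: "in_R n p \<Longrightarrow> in_R n q \<Longrightarrow> in_R n (p * q)"
  unfolding in_R_def
proof
  fix \<gamma> assume a: "\<forall>\<alpha>\<in>ks p. ks \<alpha> \<subseteq> {1..n}" "\<forall>\<alpha>\<in>ks q. ks \<alpha> \<subseteq> {1..n}" "\<gamma> \<in> ks (p * q)"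
  then obtain x y where "\<gamma> = x + y" "x \<in> ks p" "y \<in> ks q" using keys_mult[of p q] by blast
  then show "ks \<gamma> \<subseteq> {1..n}" using a Poly_Mapping.keys_add[of x y] by blast
qed

lemma in_R_Const: "in_R n (Const c)"
  by (auto simp: in_R_def Const_def)

lemma in_R_one: "in_R n 1"
  using in_R_Const[of n 1] by (simp add: Const_def)

lemma in_R_Var: "i \<in> {1..n} \<Longrightarrow> in_R n (Var i)"
  by (auto simp: in_R_def Var_def)

lemma in_R_single: "ks \<beta> \<subseteq> {1..n} \<Longrightarrow> in_R n (sng \<beta> c)"
  by (auto simp: in_R_def)

lemma in_R_power: "in_R n p \<Longrightarrow> in_R n (p ^ m)"
  by (induction m) (auto intro: in_R_mult in_R_one)

lemma in_R_zero: "in_R n 0" by (simp add: in_R_def)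

lemma in_R_sum: "(\<And>i. i \<in> I \<Longrightarrow> in_R n (g i)) \<Longrightarrow> in_R n (\<Sum>i\<in>I. g i)"
  by (induction I rule: infinite_finite_induct) (simp_all add: in_R_zero in_R_add)

lemma mdeg_superset: "finite S \<Longrightarrow> ks \<alpha> \<subseteq> S \<Longrightarrow> mdeg \<alpha> = (\<Sum>i\<in>S. lk \<alpha> i)"
  unfolding mdeg_def by (rule sum.mono_neutral_left) (auto simp: in_keys_iff)

lemma mdeg_add: "mdeg (\<alpha> + \<beta>) = mdeg \<alpha> + mdeg \<beta>"
proof -
  let ?S = "ks \<alpha> \<union> ks \<beta>"
  have "mdeg (\<alpha> + \<beta>) = (\<Sum>i\<in>?S. lk (\<alpha>+\<beta>) i)"
    by (rule mdeg_superset) (use Poly_Mapping.keys_add[of \<alpha> \<beta>] in auto)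
  also have "\<dots> = (\<Sum>i\<in>?S. lk \<alpha> i) + (\<Sum>i\<in>?S. lk \<beta> i)"
    by (simp add: lookup_add sum.distrib)
  also have "\<dots> = mdeg \<alpha> + mdeg \<beta>"
    by (subst (1 2) mdeg_superset[where S="?S"]) auto
  finally show ?thesis .
qed

lemma mdeg_unit [simp]: "mdeg (sng i (Suc 0)) = 1" by (simp add: mdeg_def)

lemma mdeg_zero_iff: "mdeg \<alpha> = 0 \<longleftrightarrow> \<alpha> = 0"
proof
  assume "mdeg \<alpha> = 0"
  then have "\<forall>i\<in>ks \<alpha>. lk \<alpha> i = 0" unfolding mdeg_def by simp
  then show "\<alpha> = 0" by (metis Poly_Mapping.keys_eq_empty all_not_in_conv lookup_not_eq_zero_eq_in_keys)
qed (simp add: mdeg_def)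

lemma mdeg_split:
  assumes "\<alpha> \<noteq> 0"
  obtains i \<beta> where "\<alpha> = sng i (Suc 0) + \<beta>" "mdeg \<beta> + 1 = mdeg \<alpha>"
proof -
  obtain i where i: "i \<in> ks \<alpha>" using assms by (metis Poly_Mapping.keys_eq_empty all_not_in_conv)
  define \<beta> where "\<beta> = \<alpha> - sng i (Suc 0)"
  have e: "\<alpha> = sng i (Suc 0) + \<beta>"
    unfolding \<beta>_def using i
    by (intro poly_mapping_eqI) (auto simp: lookup_add lookup_minus lookup_single when_def in_keys_iff)
  then have "mdeg \<alpha> = mdeg \<beta> + 1" by (simp add: mdeg_add)
  with e that show ?thesis by simp
qed

lemma mdeg_induct:
  fixes \<alpha> :: "nat \<Rightarrow>\<^sub>0 nat"
  assumes "P 0" "\<And>i \<beta>. P \<beta> \<Longrightarrow> P (sng i (Suc 0) + \<beta>)"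
  shows "P \<alpha>"
proof (induction "mdeg \<alpha>" arbitrary: \<alpha>)
  case 0
  then show ?case using assms(1) mdeg_zero_iff by metis
next
  case (Suc m)
  then have "\<alpha> \<noteq> 0" by (auto simp: mdeg_def)
  then obtain i \<beta> where "\<alpha> = sng i (Suc 0) + \<beta>" "mdeg \<beta> + 1 = mdeg \<alpha>" by (rule mdeg_split)
  with Suc show ?case using assms(2) by simp
qed

(* vanishing order at xi *)
fun V :: "(nat \<Rightarrow> 'a::comm_ring_1) \<Rightarrow> nat \<Rightarrow> 'a mpoly \<Rightarrow> bool" where
  "V \<xi> 0 q = True"
| "V \<xi> (Suc m) q = (eval q \<xi> = 0 \<and> (\<forall>i. V \<xi> m (Dg (sng i (Suc 0)) q)))"

lemma V_mono: "V \<xi> (Suc m) q \<Longrightarrow> V \<xi> m q"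
  by (induction m arbitrary: q) auto

lemma V_add: "V \<xi> m p \<Longrightarrow> V \<xi> m q \<Longrightarrow> V \<xi> m (p + q)"
  by (induction m arbitrary: p q) (auto simp: eval_add Dg_add)

lemma V_mult_aux: "a + b = N \<Longrightarrow> V \<xi> a q \<Longrightarrow> V \<xi> b r \<Longrightarrow> V \<xi> N (q * r)"
proof (induction N arbitrary: a b q r)
  case 0 then show ?case by simp
next
  case (Suc N)
  have ev: "eval (q * r) \<xi> = 0"
  proof (cases a)
    case 0
    then obtain b' where "b = Suc b'" using Suc by (cases b) auto
    then show ?thesis using Suc by (simp add: eval_mult)
  next
    case (Suc a')
    then show ?thesis using Suc.prems by (simp add: eval_mult)
  qed
  have "V \<xi> N (Dg (sng i (Suc 0)) q * r + q * Dg (sng i (Suc 0)) r)" for i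
  proof (rule V_add)
    show "V \<xi> N (Dg (sng i (Suc 0)) q * r)"
    proof (cases a)
      case 0
      with Suc.prems have "b = Suc N" by simp
      with Suc.prems have "V \<xi> N r" using V_mono by blast
      then show ?thesis using Suc.IH[of 0 N] by simp
    next
      case (Suc a')
      with Suc.prems have "V \<xi> a' (Dg (sng i (Suc 0)) q)" by simp
      then show ?thesis using Suc.IH[of a' b] Suc.prems Suc by simp
    qed
    show "V \<xi> N (q * Dg (sng i (Suc 0)) r)"
    proof (cases b)
      case 0
      with Suc.prems have "a = Suc N" by simp
      with Suc.prems have "V \<xi> N q" using V_mono by blast
      then show ?thesis using Suc.IH[of N 0] by simp
    next
      case (Suc b')
      with Suc.prems have "V \<xi> b' (Dg (sng i (Suc 0)) r)" by simp
      then show ?thesis using Suc.IH[of a b'] Suc.prems Suc by simp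
    qed
  qed
  then show ?case using ev by (simp add: leibniz')
qed

lemma V_mult: "V \<xi> a q \<Longrightarrow> V \<xi> b r \<Longrightarrow> V \<xi> (a + b) (q * r)"
  using V_mult_aux by blast

lemma V_pow: "V \<xi> 1 P \<Longrightarrow> V \<xi> m (P ^ m)"
proof (induction m)
  case (Suc m)
  then show ?case using V_mult[of \<xi> 1 P m "P ^ m"] by simp
qed simp

lemma V_Dg: "V \<xi> m q \<Longrightarrow> mdeg \<gamma> < m \<Longrightarrow> eval (Dg \<gamma> q) \<xi> = 0"
proof (induction \<gamma> arbitrary: m q rule: mdeg_induct)
  case 1
  then obtain m' where "m = Suc m'" by (cases m) auto
  with 1 show ?case by simp
next
  case (2 i \<beta>)
  then obtain m' where m: "m = Suc m'" by (cases m) auto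
  with 2 have "V \<xi> m' (Dg (sng i (Suc 0)) q)" by simp
  moreover have "mdeg \<beta> < m'" using 2 m by (simp add: mdeg_add)
  ultimately have "eval (Dg \<beta> (Dg (sng i (Suc 0)) q)) \<xi> = 0" using 2 by blast
  then show ?case by (simp add: Dg_comp add.commute)
qed



lemma finite_mle: "finite {\<beta>. mle \<beta> (\<alpha>::nat \<Rightarrow>\<^sub>0 nat)}"
proof -
  let ?F = "{g. \<forall>x. (x \<in> ks \<alpha> \<longrightarrow> g x \<in> {..mdeg \<alpha>}) \<and> (x \<notin> ks \<alpha> \<longrightarrow> g x = (0::nat))}"
  have fin: "finite ?F" by (rule finite_set_of_finite_funs) auto
  have inj: "inj_on lk {\<beta>. mle \<beta> \<alpha>}"
    by (rule inj_onI) (simp add: poly_mapping_eqI)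
  have "lk ` {\<beta>. mle \<beta> \<alpha>} \<subseteq> ?F"
  proof
    fix g assume "g \<in> lk ` {\<beta>. mle \<beta> \<alpha>}"
    then obtain \<beta> where b: "mle \<beta> \<alpha>" "g = lk \<beta>" by auto
    have "lk \<beta> x \<le> mdeg \<alpha>" if "x \<in> ks \<alpha>" for x
    proof -
      have "lk \<alpha> x \<le> mdeg \<alpha>" unfolding mdeg_def using that by (intro member_le_sum) auto
      then show ?thesis using b by (metis mle_def order_trans)
    qed
    moreover have "lk \<beta> x = 0" if "x \<notin> ks \<alpha>" for x
      using that b by (metis in_keys_iff le_zero_eq mle_def)
    ultimately show "g \<in> ?F" using b by auto
  qed
  then have "finite (lk ` {\<beta>. mle \<beta> \<alpha>})" using fin by (rule finite_subset)
  then show ?thesis using inj by (rule finite_imageD)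
qed

lemma ff_zero_not_mle: "\<not> mle \<beta> \<alpha> \<Longrightarrow> ff \<alpha> \<beta> = 0"
proof -
  assume "\<not> mle \<beta> \<alpha>"
  then obtain i where i: "lk \<alpha> i < lk \<beta> i" by (auto simp: mle_def not_le)
  then have "i \<in> ks \<beta>" by (simp add: in_keys_iff)
  moreover have "FF (lk \<alpha> i) (lk \<beta> i) = 0" using i FF_zero by blast
  ultimately show ?thesis unfolding ff_def by (metis finite_keys prod_zero)
qed

lemma keys_mle: "mle \<beta> \<alpha> \<Longrightarrow> ks \<beta> \<subseteq> ks \<alpha>"
proof
  fix i assume m: "mle \<beta> \<alpha>" and "i \<in> ks \<beta>"
  then have "lk \<beta> i \<noteq> 0" by (simp add: in_keys_iff)
  with m have "lk \<alpha> i \<noteq> 0" by (metis le_zero_eq mle_def)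
  then show "i \<in> ks \<alpha>" by (simp add: in_keys_iff)
qed

lemma ff_mfact: "mle \<beta> \<alpha> \<Longrightarrow> ff \<alpha> \<beta> * mfact (\<alpha> - \<beta>) = mfact \<alpha>"
proof -
  assume m: "mle \<beta> \<alpha>"
  let ?S = "ks \<alpha>"
  have "ff \<alpha> \<beta> * mfact (\<alpha> - \<beta>) = (\<Prod>i\<in>?S. FF (lk \<alpha> i) (lk \<beta> i)) * (\<Prod>i\<in>?S. fact (lk (\<alpha> - \<beta>) i))"
    by (subst ff_superset[where S="?S"], simp, rule keys_mle[OF m])
       (subst mfact_superset[where S="?S"], simp_all add: keys_minus_nat)
  also have "\<dots> = (\<Prod>i\<in>?S. FF (lk \<alpha> i) (lk \<beta> i) * fact (lk \<alpha> i - lk \<beta> i))"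
    by (simp add: prod.distrib lookup_minus)
  also have "\<dots> = (\<Prod>i\<in>?S. fact (lk \<alpha> i))"
    using m by (intro prod.cong refl) (simp add: mle_def FF_fact)
  also have "\<dots> = mfact \<alpha>" by (simp add: mfact_def)
  finally show ?thesis .
qed

lemma mfact_pos: "mfact \<alpha> > 0"
  by (simp add: mfact_def)

lemma dual_formula:
  fixes f :: "'a::field_char_0 mpoly"
  assumes "in_R n q"
  shows "dual_app (functional_of_ser (ser_mult (ser_of_poly f) (exp_ser n \<xi>))) q
       = (\<Sum>\<gamma>\<in>ks f. lk f \<gamma> * eval (Dg \<gamma> q) \<xi>)"
proof (rule lin_eq_on[where P="\<lambda>\<alpha>. ks \<alpha> \<subseteq> {1..n}" and
    F="dual_app (functional_of_ser (ser_mult (ser_of_poly f) (exp_ser n \<xi>)))" and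
    G="\<lambda>q. \<Sum>\<gamma>\<in>ks f. lk f \<gamma> * eval (Dg \<gamma> q) \<xi>"])
  show "\<forall>k\<in>ks q. ks k \<subseteq> {1..n}" using assms by (simp add: in_R_def)
  show "\<And>p q. dual_app (functional_of_ser (ser_mult (ser_of_poly f) (exp_ser n \<xi>))) (p + q) =
           dual_app (functional_of_ser (ser_mult (ser_of_poly f) (exp_ser n \<xi>))) p +
           dual_app (functional_of_ser (ser_mult (ser_of_poly f) (exp_ser n \<xi>))) q"
    by (rule dual_add)
  show "\<And>p q. (\<Sum>\<gamma>\<in>ks f. lk f \<gamma> * eval (Dg \<gamma> (p + q)) \<xi>) =
           (\<Sum>\<gamma>\<in>ks f. lk f \<gamma> * eval (Dg \<gamma> p) \<xi>) + (\<Sum>\<gamma>\<in>ks f. lk f \<gamma> * eval (Dg \<gamma> q) \<xi>)"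
    by (simp add: Dg_add eval_add distrib_left sum.distrib)
  fix \<alpha> :: "nat \<Rightarrow>\<^sub>0 nat" and c :: 'a
  assume a: "ks \<alpha> \<subseteq> {1..n}"
  let ?B = "{\<beta>. mle \<beta> \<alpha>}"
  let ?g = "\<lambda>\<beta>. lk f \<beta> * of_nat (ff \<alpha> \<beta>) * mpow \<xi> (\<alpha> - \<beta>)"
  have "of_nat (mfact \<alpha>) * (\<Sum>\<beta>\<in>?B. lk f \<beta> * exp_ser n \<xi> (\<alpha> - \<beta>)) = (\<Sum>\<beta>\<in>?B. ?g \<beta>)"
    unfolding sum_distrib_left
  proof (rule sum.cong[OF refl])
    fix \<beta> assume b: "\<beta> \<in> ?B"
    have k: "ks (\<alpha> - \<beta>) \<subseteq> {1..n}" using a keys_minus_nat[of \<alpha> \<beta>] by blast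
    have "(of_nat (mfact \<alpha>) :: 'a) = of_nat (ff \<alpha> \<beta>) * of_nat (mfact (\<alpha> - \<beta>))"
      using ff_mfact[of \<beta> \<alpha>] b by (metis mem_Collect_eq of_nat_mult)
    moreover have "(of_nat (mfact (\<alpha> - \<beta>)) :: 'a) \<noteq> 0" using mfact_pos[of "\<alpha> - \<beta>"] by simp
    ultimately show "of_nat (mfact \<alpha>) * (lk f \<beta> * exp_ser n \<xi> (\<alpha> - \<beta>)) = ?g \<beta>"
      using k by (simp add: exp_ser_def field_simps)
  qed
  also have "\<dots> = (\<Sum>\<beta>\<in>?B \<union> ks f. ?g \<beta>)"
    by (rule sum.mono_neutral_left) (auto simp: finite_mle ff_zero_not_mle)
  also have "\<dots> = (\<Sum>\<beta>\<in>ks f. ?g \<beta>)"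
    by (rule sum.mono_neutral_right) (auto simp: finite_mle in_keys_iff)
  finally have *: "of_nat (mfact \<alpha>) * (\<Sum>\<beta>\<in>?B. lk f \<beta> * exp_ser n \<xi> (\<alpha> - \<beta>)) = (\<Sum>\<beta>\<in>ks f. ?g \<beta>)" .
  show "dual_app (functional_of_ser (ser_mult (ser_of_poly f) (exp_ser n \<xi>))) (sng \<alpha> c) =
        (\<Sum>\<gamma>\<in>ks f. lk f \<gamma> * eval (Dg \<gamma> (sng \<alpha> c)) \<xi>)"
  proof -
    have "dual_app (functional_of_ser (ser_mult (ser_of_poly f) (exp_ser n \<xi>))) (sng \<alpha> c)
        = c * (of_nat (mfact \<alpha>) * (\<Sum>\<beta>\<in>?B. lk f \<beta> * exp_ser n \<xi> (\<alpha> - \<beta>)))"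
      by (simp add: dual_single functional_of_ser_def ser_mult_def ser_of_poly_def)
    also have "\<dots> = c * (\<Sum>\<beta>\<in>ks f. ?g \<beta>)" by (simp only: *)
    also have "\<dots> = (\<Sum>\<gamma>\<in>ks f. lk f \<gamma> * eval (Dg \<gamma> (sng \<alpha> c)) \<xi>)"
      by (simp add: Dg_single eval_single sum_distrib_left mult_ac)
    finally show ?thesis .
  qed
qed

lemma mpow_split: "mpow b \<alpha> = b N ^ lk \<alpha> N * mpow b (Poly_Mapping.update N 0 \<alpha>)"
proof -
  have "mpow b \<alpha> = (\<Prod>i\<in>insert N (ks \<alpha>). b i ^ lk \<alpha> i)"
    by (rule mpow_superset) auto
  also have "\<dots> = b N ^ lk \<alpha> N * (\<Prod>i\<in>ks \<alpha> - {N}. b i ^ lk \<alpha> i)"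
    by (simp add: prod.insert_remove)
  also have "(\<Prod>i\<in>ks \<alpha> - {N}. b i ^ lk \<alpha> i) = mpow b (Poly_Mapping.update N 0 \<alpha>)"
    by (subst mpow_superset[where S="ks \<alpha> - {N}"]) (auto simp: keys_update lookup_update)
  finally show ?thesis .
qed

lemma mpow_upd_indep: "mpow (b(N:=t)) (Poly_Mapping.update N 0 \<alpha>) = mpow b (Poly_Mapping.update N 0 \<alpha>)"
  unfolding mpow_def by (rule prod.cong) (auto simp: keys_update)

lemma nonroot_coeffs:
  fixes c :: "(nat \<Rightarrow>\<^sub>0 nat) \<Rightarrow> 'a::field_char_0"
  shows "finite S \<Longrightarrow> \<forall>\<alpha>\<in>S. ks \<alpha> \<subseteq> {..<N} \<Longrightarrow> \<forall>a. (\<Sum>\<alpha>\<in>S. c \<alpha> * mpow a \<alpha>) = 0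
     \<Longrightarrow> \<alpha>0 \<in> S \<Longrightarrow> c \<alpha>0 = 0"
proof (induction N arbitrary: S c \<alpha>0)
  case 0
  then have "\<forall>\<alpha>\<in>S. \<alpha> = 0" by (metis Poly_Mapping.keys_eq_empty lessThan_0 subset_empty)
  with 0 have S: "S = {0}" "\<alpha>0 = 0" by auto
  then show ?case using 0 by simp
next
  case (Suc N)
  define upd where "upd \<alpha> = Poly_Mapping.update N 0 \<alpha>" for \<alpha> :: "nat \<Rightarrow>\<^sub>0 nat"
  define j where "j = lk \<alpha>0 N"
  define Sj where "Sj = {\<alpha>\<in>S. lk \<alpha> N = j}"
  have C0: "(\<Sum>\<alpha>\<in>Sj. c \<alpha> * mpow a (upd \<alpha>)) = 0" for a
  proof -
    define Q where "Q = (\<Sum>\<alpha>\<in>S. monom (c \<alpha> * mpow a (upd \<alpha>)) (lk \<alpha> N))"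
    have "poly Q t = 0" for t
    proof -
      have "poly Q t = (\<Sum>\<alpha>\<in>S. c \<alpha> * mpow a (upd \<alpha>) * t ^ lk \<alpha> N)"
        by (simp add: Q_def poly_sum poly_monom)
      also have "\<dots> = (\<Sum>\<alpha>\<in>S. c \<alpha> * mpow (a(N:=t)) \<alpha>)"
        by (rule sum.cong[OF refl], subst mpow_split[of "a(N:=t)" _ N]) (simp add: mpow_upd_indep upd_def mult_ac)
      also have "\<dots> = 0" using Suc.prems(3) by blast
      finally show ?thesis .
    qed
    then have "Q = 0" using poly_all_0_iff_0 by blast
    then have "coeff Q j = 0" by simp
    moreover have "coeff Q j = (\<Sum>\<alpha>\<in>Sj. c \<alpha> * mpow a (upd \<alpha>))"
      using Suc.prems(1) by (simp add: Q_def coeff_sum Sj_def sum.inter_filter)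
    ultimately show ?thesis by simp
  qed
  have bk: "Poly_Mapping.update N j (upd \<alpha>) = \<alpha>" if "\<alpha> \<in> Sj" for \<alpha>
    using that by (intro poly_mapping_eqI) (auto simp: upd_def Sj_def lookup_update)
  have inj: "inj_on upd Sj"
    by (rule inj_onI) (metis bk)
  define c' where "c' \<beta> = c (Poly_Mapping.update N j \<beta>)" for \<beta>
  have a0: "\<alpha>0 \<in> Sj" using Suc.prems(4) by (simp add: Sj_def j_def)
  have "c' (upd \<alpha>0) = 0"
  proof (rule Suc.IH[of "upd ` Sj" c'])
    show "finite (upd ` Sj)" using Suc.prems(1) by (simp add: Sj_def)
    show "\<forall>\<alpha>\<in>upd ` Sj. ks \<alpha> \<subseteq> {..<N}"
      using Suc.prems(2) by (auto simp: upd_def Sj_def keys_update) (metis lessThan_iff less_SucE subsetD)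
    show "\<forall>a. (\<Sum>\<alpha>\<in>upd ` Sj. c' \<alpha> * mpow a \<alpha>) = 0"
    proof
      fix a
      have "(\<Sum>\<alpha>\<in>upd ` Sj. c' \<alpha> * mpow a \<alpha>) = (\<Sum>\<alpha>\<in>Sj. c' (upd \<alpha>) * mpow a (upd \<alpha>))"
        by (rule sum.reindex[OF inj, unfolded comp_def])
      also have "\<dots> = (\<Sum>\<alpha>\<in>Sj. c \<alpha> * mpow a (upd \<alpha>))"
        by (rule sum.cong[OF refl]) (simp add: c'_def bk)
      also have "\<dots> = 0" by (rule C0)
      finally show "(\<Sum>\<alpha>\<in>upd ` Sj. c' \<alpha> * mpow a \<alpha>) = 0" .
    qed
    show "upd \<alpha>0 \<in> upd ` Sj" using a0 by blast
  qed
  then show ?case using bk[OF a0] by (simp add: c'_def)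
qed

lemma nonroot:
  fixes p :: "'a::field_char_0 mpoly"
  assumes "p \<noteq> 0" "\<forall>\<alpha>\<in>ks p. ks \<alpha> \<subseteq> {..<N}"
  shows "\<exists>a. eval p a \<noteq> 0"
proof (rule ccontr)
  assume "\<not> ?thesis"
  then have z: "\<forall>a. (\<Sum>\<alpha>\<in>ks p. lk p \<alpha> * mpow a \<alpha>) = 0" by (simp add: eval_def)
  obtain \<alpha>0 where a0: "\<alpha>0 \<in> ks p" using assms(1) by (metis Poly_Mapping.keys_eq_empty all_not_in_conv)
  have "lk p \<alpha>0 = 0" by (rule nonroot_coeffs[OF finite_keys assms(2) z a0])
  with a0 show False by (simp add: in_keys_iff)
qed



lemma of_nat_mpoly: "(of_nat m :: 'a::comm_ring_1 mpoly) = Const (of_nat m)"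
  by (simp add: Const_def)

lemma Const_one: "Const 1 = (1 :: 'a::comm_ring_1 mpoly)"
  by (simp add: Const_def)

lemma Const_zero: "Const 0 = (0 :: 'a::comm_ring_1 mpoly)"
  by (simp add: Const_def)

lemma Dg_one: "Dg (sng i (Suc 0)) (1 :: 'a::comm_ring_1 mpoly) = 0"
  using Dg_Const[of i 1] by (simp add: Const_one)

lemma ideal_ext:
  fixes \<phi> :: "(nat \<Rightarrow>\<^sub>0 nat) \<Rightarrow> 'a::comm_ring_1"
  assumes "\<forall>\<beta>. star n q \<phi> \<beta> = 0" "in_R n s"
  shows "dual_app \<phi> (q * s) = 0"
proof -
  have "dual_app \<phi> (q * s) = (\<lambda>s. 0) s"
  proof (rule lin_eq_on[where F="\<lambda>s. dual_app \<phi> (q * s)" and G="\<lambda>s. 0" and P="\<lambda>\<beta>. ks \<beta> \<subseteq> {1..n}"])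
    show "\<forall>k\<in>ks s. ks k \<subseteq> {1..n}" using assms(2) by (simp add: in_R_def)
    fix \<beta> :: "nat \<Rightarrow>\<^sub>0 nat" and c :: 'a assume b: "ks \<beta> \<subseteq> {1..n}"
    have e: "q * sng \<beta> c = Const c * (q * sng \<beta> 1)" by (simp add: Const_mult_single mult.left_commute)
    have "dual_app \<phi> (q * sng \<beta> c) = c * dual_app \<phi> (q * sng \<beta> 1)"
      unfolding e by (rule dual_Const_mult)
    also have "dual_app \<phi> (q * sng \<beta> 1) = star n q \<phi> \<beta>" using b by (simp add: star_def)
    finally show "dual_app \<phi> (q * sng \<beta> c) = 0" using assms(1) by simp
  qed (auto simp: distrib_left dual_add)
  then show ?thesis by simp
qed



theorem proposition4p16:
  fixes n d k :: nat
    and \<xi> :: "nat \<Rightarrow> 'a::field_char_0"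
    and \<omega> l :: "'a mpoly"
    and om :: "nat \<Rightarrow> 'a mpoly"
  assumes "k \<le> d"
    and "in_S n \<omega>" and "homogeneous k \<omega>"
    and "l = Var 0 + (\<Sum>i=1..n. Const (\<xi> i) * Var i)"
    and "\<not> l dvd \<omega>"
    and "\<And>j. j \<le> k \<Longrightarrow> in_R n (om j) \<and> homogeneous j (om j)"
    and "\<omega> = (\<Sum>j\<le>k. om j * l ^ (k - j))"
  shows "is_nil_index n (I_xi n d k om \<xi>) \<xi> (k + 1)"
proof -
  note omj = assms(6)
  define f where "f = omega_dlx d k om"
  define \<phi> where "\<phi> = functional_of_ser (ser_mult (ser_of_poly f) (exp_ser n \<xi>))"
  have I_eq: "I_xi n d k om \<xi> = {p. in_R n p \<and> star n p \<phi> = (\<lambda>_. 0)}"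
    by (simp add: I_xi_def f_def \<phi>_def)
  define c where "c j = (fact (d - j) / fact d :: 'a)" for j
  have ck: "c k \<noteq> 0" by (simp add: c_def)
  have lkf: "lk f \<gamma> = (\<Sum>j\<le>k. c j * lk (om j) \<gamma>)" for \<gamma>
    by (simp add: f_def omega_dlx_def lookup_sum lookup_Const_mult c_def)
  have homog: "mdeg \<gamma> = j" if "j \<le> k" "lk (om j) \<gamma> \<noteq> 0" for j \<gamma>
    using omj[OF that(1)] that(2) by (simp add: homogeneous_def in_keys_iff)
  have f_big: "lk f \<gamma> = 0" if "mdeg \<gamma> > k" for \<gamma>
    unfolding lkf
  proof (rule sum.neutral, rule ballI)
    fix j assume j: "j \<in> {..k}"
    have "lk (om j) \<gamma> = 0"
    proof (rule ccontr)
      assume "lk (om j) \<gamma> \<noteq> 0"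
      then have "mdeg \<gamma> = j" using homog j by simp
      then show False using j that by simp
    qed
    then show "c j * lk (om j) \<gamma> = 0" by simp
  qed
  have f_top: "lk f \<gamma> = c k * lk (om k) \<gamma>" if "mdeg \<gamma> = k" for \<gamma>
  proof -
    have "lk f \<gamma> = (\<Sum>j\<le>k. if j = k then c k * lk (om k) \<gamma> else 0)"
      unfolding lkf
    proof (rule sum.cong[OF refl])
      fix j assume j: "j \<in> {..k}"
      show "c j * lk (om j) \<gamma> = (if j = k then c k * lk (om k) \<gamma> else 0)"
      proof (cases "j = k")
        case False
        have "lk (om j) \<gamma> = 0"
        proof (rule ccontr)
          assume "lk (om j) \<gamma> \<noteq> 0"
          then have "mdeg \<gamma> = j" using homog j by simp
          then show False using False that by simp
        qed
        then show ?thesis using False by simp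
      qed simp
    qed
    then show ?thesis by simp
  qed
  have keysf: "mdeg \<gamma> \<le> k" if "\<gamma> \<in> ks f" for \<gamma>
    using f_big that by (meson in_keys_iff not_le)
  have omk: "om k \<noteq> 0"
  proof
    assume z: "om k = 0"
    have "\<omega> = (\<Sum>j\<in>insert k {..<k}. om j * l ^ (k - j))"
      using assms(7) by (simp add: lessThan_Suc_atMost[symmetric] lessThan_Suc)
    also have "\<dots> = (\<Sum>j<k. om j * l ^ (k - j))" using z by simp
    finally have "\<omega> = (\<Sum>j<k. om j * l ^ (k - j))" .
    moreover have "l dvd (\<Sum>j<k. om j * l ^ (k - j))"
      by (rule dvd_sum) (simp add: dvd_mult)
    ultimately show False using assms(5) by simp
  qed
  have omkR: "in_R n (om k)" using omj by simp
  have kk: "\<forall>\<alpha>\<in>ks (om k). ks \<alpha> \<subseteq> {..<Suc n}"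
  proof
    fix \<alpha> assume "\<alpha> \<in> ks (om k)"
    then have "ks \<alpha> \<subseteq> {1..n}" using omkR by (simp add: in_R_def)
    then show "ks \<alpha> \<subseteq> {..<Suc n}" by auto
  qed
  obtain a where a: "eval (om k) a \<noteq> 0"
    using nonroot[OF omk kk] by blast
  define a' where "a' i = (if i \<in> {1..n} then a i else 0)" for i
  have eval_a': "eval (om k) a' = eval (om k) a"
    unfolding eval_def
  proof (rule sum.cong[OF refl])
    fix \<gamma> assume "\<gamma> \<in> ks (om k)"
    then have "ks \<gamma> \<subseteq> {1..n}" using omkR by (auto simp: in_R_def)
    then have "mpow a' \<gamma> = mpow a \<gamma>" unfolding mpow_def a'_def by (intro prod.cong) auto
    then show "lk (om k) \<gamma> * mpow a' \<gamma> = lk (om k) \<gamma> * mpow a \<gamma>" by simp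
  qed
  define L where "L = (\<Sum>i=1..n. Const (a i) * Var i)"
  define P where "P = L - Const (eval L \<xi>)"
  have LR: "in_R n L" unfolding L_def
    by (intro in_R_sum in_R_mult in_R_Const in_R_Var) auto
  have PR: "in_R n P" unfolding P_def by (intro in_R_diff LR in_R_Const)
  have eP: "eval P \<xi> = 0" by (simp add: P_def eval_diff)
  have DP: "Dg (sng i (Suc 0)) P = Const (a' i)" for i
  proof -
    have "Dg (sng i (Suc 0)) L = (\<Sum>j=1..n. Const (a j) * (if i = j then 1 else 0))"
      unfolding L_def by (simp add: Dg_sum Dg_Const_mult[simplified] Dg_Var[simplified])
    also have "\<dots> = (\<Sum>j=1..n. if i = j then Const (a j) else 0)"
      by (rule sum.cong) auto
    also have "\<dots> = Const (a' i)" by (simp add: a'_def Const_zero)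
    finally show ?thesis by (simp add: P_def Dg_diff Dg_Const[simplified])
  qed
  have Dpow: "Dg \<gamma> (P ^ m) = Const (of_nat (FF m (mdeg \<gamma>)) * mpow a' \<gamma>) * P ^ (m - mdeg \<gamma>)" for \<gamma> m
  proof (induction \<gamma> rule: mdeg_induct)
    case 1
    then show ?case by (simp add: mdeg_def Const_one)
  next
    case (2 i \<beta>)
    let ?g = "mdeg \<beta>"
    let ?C = "of_nat (FF m ?g) * mpow a' \<beta>"
    have "Dg (sng i (Suc 0) + \<beta>) (P ^ m) = Dg (sng i (Suc 0)) (Dg \<beta> (P ^ m))"
      by (simp add: Dg_comp)
    also have "\<dots> = Const ?C * Dg (sng i (Suc 0)) (P ^ (m - ?g))"
      using 2 by (simp add: Dg_Const_mult[simplified])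
    also have "\<dots> = Const (of_nat (FF m (mdeg (sng i (Suc 0) + \<beta>))) * mpow a' (sng i (Suc 0) + \<beta>))
                     * P ^ (m - mdeg (sng i (Suc 0) + \<beta>))"
    proof (cases "m - ?g")
      case 0
      then have "FF m (Suc ?g) = 0" by (simp add: FF_Suc)
      then show ?thesis using 0 by (simp add: Dg_one mdeg_add Const_zero)
    next
      case (Suc r)
      have "Dg (sng i (Suc 0)) (P ^ (m - ?g)) = of_nat (Suc r) * P ^ r * Const (a' i)"
        using Suc Dg_power[of i P r] DP by simp
      moreover have "FF m (Suc ?g) = FF m ?g * Suc r" using Suc by (simp add: FF_Suc)
      moreover have "m - Suc ?g = r" using Suc by simp
      ultimately show ?thesis
        by (simp add: mdeg_add mpow_add of_nat_mpoly Const_mult_Const mult_ac distrib_right)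
    qed
    finally show ?case .
  qed
  have evalD: "eval (Dg \<gamma> (P ^ k)) \<xi> = (if mdeg \<gamma> = k then fact k * mpow a' \<gamma> else 0)" for \<gamma>
  proof -
    have "eval (Dg \<gamma> (P ^ k)) \<xi> = of_nat (FF k (mdeg \<gamma>)) * mpow a' \<gamma> * 0 ^ (k - mdeg \<gamma>)"
      by (simp add: Dpow eval_mult eval_power eP)
    moreover have "FF k k = fact k" using FF_fact[of k k] by simp
    moreover have "mdeg \<gamma> > k \<Longrightarrow> FF k (mdeg \<gamma>) = 0" by (rule FF_zero)
    ultimately show ?thesis by (cases "mdeg \<gamma> = k") (auto simp: of_nat_fact)
  qed
  let ?t = "\<lambda>\<gamma>. c k * fact k * (lk (om k) \<gamma> * mpow a' \<gamma>)"
  have trm: "lk f \<gamma> * eval (Dg \<gamma> (P ^ k)) \<xi> = ?t \<gamma>" for \<gamma>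
  proof (cases "mdeg \<gamma> = k")
    case True then show ?thesis by (simp add: evalD f_top)
  next
    case False
    then have "lk (om k) \<gamma> = 0" using homog by blast
    then show ?thesis using False by (simp add: evalD)
  qed
  have dual_Pk: "dual_app \<phi> (P ^ k) = c k * fact k * eval (om k) a'"
  proof -
    have "dual_app \<phi> (P ^ k) = (\<Sum>\<gamma>\<in>ks f. lk f \<gamma> * eval (Dg \<gamma> (P ^ k)) \<xi>)"
      unfolding \<phi>_def by (rule dual_formula) (intro in_R_power PR)
    also have "\<dots> = (\<Sum>\<gamma>\<in>ks f. ?t \<gamma>)" by (simp add: trm)
    also have "\<dots> = (\<Sum>\<gamma>\<in>ks f \<union> ks (om k). ?t \<gamma>)"
    proof (rule sum.mono_neutral_left)
      show "\<forall>\<gamma>\<in>ks f \<union> ks (om k) - ks f. ?t \<gamma> = 0"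
      proof
        fix \<gamma> assume g: "\<gamma> \<in> ks f \<union> ks (om k) - ks f"
        then have "lk f \<gamma> = 0" by (simp add: in_keys_iff)
        then show "?t \<gamma> = 0" using trm[of \<gamma>] by simp
      qed
    qed auto
    also have "\<dots> = (\<Sum>\<gamma>\<in>ks (om k). ?t \<gamma>)"
      by (rule sum.mono_neutral_right) (auto simp: in_keys_iff)
    also have "\<dots> = c k * fact k * eval (om k) a'"
      by (simp add: eval_def sum_distrib_left)
    finally show ?thesis .
  qed
  have nz: "dual_app \<phi> (P ^ k) \<noteq> 0"
    using ck a eval_a' by (simp add: dual_Pk)
  show ?thesis
    unfolding is_nil_index_def nil_prop_def I_eq
  proof (intro conjI allI impI)
    fix p :: "'a mpoly" assume pR: "in_R n p"
    define Q where "Q = p - Const (eval p \<xi>)"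
    have QR: "in_R n Q" unfolding Q_def by (intro in_R_diff pR in_R_Const)
    have V1: "V \<xi> 1 Q" by (simp add: Q_def eval_diff)
    have "star n (Q ^ (k + 1)) \<phi> = (\<lambda>_. 0)"
    proof
      fix \<beta> :: "nat \<Rightarrow>\<^sub>0 nat"
      show "star n (Q ^ (k + 1)) \<phi> \<beta> = 0"
      proof (cases "ks \<beta> \<subseteq> {1..n}")
        case True
        have R: "in_R n (Q ^ (k + 1) * sng \<beta> 1)"
          by (intro in_R_mult in_R_power QR in_R_single True)
        have VV: "V \<xi> (k + 1 + 0) (Q ^ (k + 1) * sng \<beta> 1)"
          by (rule V_mult) (rule V_pow[OF V1], simp)
        have "dual_app \<phi> (Q ^ (k + 1) * sng \<beta> 1) = 0"
          unfolding \<phi>_def dual_formula[OF R]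
        proof (rule sum.neutral, intro ballI)
          fix \<gamma> assume "\<gamma> \<in> ks f"
          then have "mdeg \<gamma> < k + 1 + 0" using keysf by force
          then show "lk f \<gamma> * eval (Dg \<gamma> (Q ^ (k + 1) * sng \<beta> 1)) \<xi> = 0"
            using V_Dg[OF VV] by simp
        qed
        then show ?thesis using True by (simp add: star_def)
      qed (simp add: star_def)
    qed
    then show "(p - Const (eval p \<xi>)) ^ (k + 1) \<in> {p. in_R n p \<and> star n p \<phi> = (\<lambda>_. 0)}"
      using QR in_R_power[OF QR, of "k+1"] by (simp add: Q_def[symmetric] del: power_Suc)
  next
    fix M assume M: "M < k + 1"
    show "\<not> (\<forall>p. in_R n p \<longrightarrow> (p - Const (eval p \<xi>)) ^ M \<in> {p. in_R n p \<and> star n p \<phi> = (\<lambda>_. 0)})"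
    proof
      assume "\<forall>p. in_R n p \<longrightarrow> (p - Const (eval p \<xi>)) ^ M \<in> {p. in_R n p \<and> star n p \<phi> = (\<lambda>_. 0)}"
      then have "star n (P ^ M) \<phi> = (\<lambda>_. 0)" using LR by (simp add: P_def)
      then have "dual_app \<phi> (P ^ M * P ^ (k - M)) = 0"
        by (intro ideal_ext[where n=n] in_R_power PR) simp
      moreover have "P ^ M * P ^ (k - M) = P ^ k" using M by (simp add: power_add[symmetric])
      ultimately show False using nz by simp
    qed
  qed
qed

end
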